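(* Let $S$ be any set, $m\ge 2$, $s:I_m\to S$, and $s'=\tau_{m-1}s$. If $(s,s')$ is a special pair, then $s=s'$.
   Context: $\mathcal{S}_m$ acts on sequences $s:I_m\to S$ by $\sigma s=s\circ\sigma^{-1}$. For $i\in I_m$, $\tau_i(j)=i+1-j$ for $j\le i$ and $\tau_i(j)=j$ for $j>i$; thus $(\tau_{m-1}s)(i)=s(m-i)$ for $i<m$ and $(\tau_{m-1}s)(m)=s(m)$. $(\mathrm{rev}\,s)(i)=s(m+1-i)$. An element $A\in\mathrm{Im}\,s$ is direct for $(s,s')$ if $s'(i)=A$ for all $i\in s^{-1}(A)$, and reverse for $(s,s')$ if $(\mathrm{rev}\,s')(i)=A$ for all $i\in s^{-1}(A)$. The pair $(s,s')$ is special if every $A\in\mathrm{Im}\,s$ is direct or reverse for $(s,s')$. *)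

theory Defs
  imports Main
begin

text \<open>Sequences s : I_m \<rightarrow> S with I_m = {1..m} are represented as functions
  nat \<Rightarrow> 'a, of which only the values on {1..m} matter.\<close>

definition I :: "nat \<Rightarrow> nat set" where
  "I m = {1..m}"

definition perm_act :: "nat \<Rightarrow> (nat \<Rightarrow> nat) \<Rightarrow> (nat \<Rightarrow> 'a) \<Rightarrow> (nat \<Rightarrow> 'a)" where
  "perm_act m \<sigma> s = (\<lambda>i. s (inv_into (I m) \<sigma> i))"

definition tau :: "nat \<Rightarrow> nat \<Rightarrow> nat" where
  "tau i j = (if j \<le> i then i + 1 - j else j)"

definition rev_seq :: "nat \<Rightarrow> (nat \<Rightarrow> 'a) \<Rightarrow> (nat \<Rightarrow> 'a)" where
  "rev_seq m s = (\<lambda>i. s (m + 1 - i))"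

definition is_direct :: "nat \<Rightarrow> (nat \<Rightarrow> 'a) \<Rightarrow> (nat \<Rightarrow> 'a) \<Rightarrow> 'a \<Rightarrow> bool" where
  "is_direct m s s' A \<longleftrightarrow> (\<forall>i \<in> I m. s i = A \<longrightarrow> s' i = A)"

definition is_reverse :: "nat \<Rightarrow> (nat \<Rightarrow> 'a) \<Rightarrow> (nat \<Rightarrow> 'a) \<Rightarrow> 'a \<Rightarrow> bool" where
  "is_reverse m s s' A \<longleftrightarrow> (\<forall>i \<in> I m. s i = A \<longrightarrow> rev_seq m s' i = A)"

definition special :: "nat \<Rightarrow> (nat \<Rightarrow> 'a) \<Rightarrow> (nat \<Rightarrow> 'a) \<Rightarrow> bool" where
  "special m s s' \<longleftrightarrow> (\<forall>A \<in> s ` I m. is_direct m s s' A \<or> is_reverse m s s' A)"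

end

theory Submission
  imports Defs
begin

lemma tau_inv:
  assumes "m \<ge> 2" "i \<in> I m"
  shows "inv_into (I m) (tau (m - 1)) i = tau (m - 1) i"
proof (rule inv_into_f_eq)
  show "inj_on (tau (m - 1)) (I m)"
    by (auto simp: inj_on_def tau_def I_def split: if_splits)
  show "tau (m - 1) i \<in> I m" using assms by (auto simp: tau_def I_def)
  show "tau (m - 1) (tau (m - 1) i) = i" using assms by (auto simp: tau_def I_def)
qed

lemma down:
  fixes s :: "nat \<Rightarrow> 'a" and m j k :: nat
  assumes st: "\<And>j. 2 \<le> j \<Longrightarrow> j \<le> m \<Longrightarrow> s j = A \<Longrightarrow> s (j - 1) = A"
  shows "s j = A \<Longrightarrow> j \<le> m \<Longrightarrow> 1 \<le> k \<Longrightarrow> k \<le> j \<Longrightarrow> s k = A"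
proof -
  have "\<forall>j. j - k = n \<longrightarrow> s j = A \<longrightarrow> j \<le> m \<longrightarrow> 1 \<le> k \<longrightarrow> k \<le> j \<longrightarrow> s k = A" for n
  proof (induction n)
    case 0 then show ?case by (metis diff_is_0_eq le_antisym)
  next
    case (Suc n)
    show ?case
    proof (intro allI impI)
      fix j assume h: "j - k = Suc n" "s j = A" "j \<le> m" "1 \<le> k" "k \<le> j"
      have "2 \<le> j" using h by linarith
      then have "s (j - 1) = A" using st h by blast
      moreover have "j - 1 - k = n" "j - 1 \<le> m" "k \<le> j - 1" using h by linarith+
      ultimately show "s k = A" using Suc.IH h(4) by blast
    qed
  qed
  then show "s j = A \<Longrightarrow> j \<le> m \<Longrightarrow> 1 \<le> k \<Longrightarrow> k \<le> j \<Longrightarrow> s k = A" by blast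
qed

theorem mainTheorem19:
  fixes S :: "'a set" and m :: nat and s s' :: "nat \<Rightarrow> 'a"
  assumes "m \<ge> 2"
    and "s ` I m \<subseteq> S"
    and "s' = perm_act m (tau (m - 1)) s"
    and "special m s s'"
  shows "\<forall>i \<in> I m. s i = s' i"
proof
  fix i assume i: "i \<in> I m"
  have s': "\<And>k. k \<in> I m \<Longrightarrow> s' k = s (tau (m - 1) k)"
    using assms(1,3) tau_inv by (simp add: perm_act_def)
  let ?A = "s i"
  have "is_direct m s s' ?A \<or> is_reverse m s s' ?A"
    using assms(4) i unfolding special_def by blast
  then show "s i = s' i"
  proof
    assume "is_direct m s s' ?A" then show ?thesis using i by (auto simp: is_direct_def)
  next
    assume r: "is_reverse m s s' ?A"
    have r2: "\<And>j. j \<in> I m \<Longrightarrow> s j = ?A \<Longrightarrow> s (tau (m - 1) (m + 1 - j)) = ?A"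
    proof -
      fix j assume "j \<in> I m" "s j = ?A"
      then have "s' (m + 1 - j) = ?A" using r by (auto simp: is_reverse_def rev_seq_def)
      moreover have "m + 1 - j \<in> I m" using \<open>j \<in> I m\<close> by (auto simp: I_def)
      ultimately show "s (tau (m - 1) (m + 1 - j)) = ?A" using s' by simp
    qed
    have step: "\<And>j. 2 \<le> j \<Longrightarrow> j \<le> m \<Longrightarrow> s j = ?A \<Longrightarrow> s (j - 1) = ?A"
    proof -
      fix j assume j: "2 \<le> j" "j \<le> m" "s j = ?A"
      have "tau (m - 1) (m + 1 - j) = j - 1" using j by (auto simp: tau_def)
      then show "s (j - 1) = ?A" using r2[of j] j by (auto simp: I_def)
    qed
    have i1: "1 \<le> i" "i \<le> m" using i by (auto simp: I_def)
    have "s 1 = ?A" by (rule down[where s=s and A="?A" and j=i and k=1 and m=m, OF step]) (use i1 in auto)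
    moreover have "tau (m - 1) (m + 1 - 1) = m" using assms(1) by (simp add: tau_def)
    moreover have "1 \<in> I m" using assms(1) by (simp add: I_def)
    ultimately have sm: "s m = ?A" using r2[of 1] by simp
    have all: "\<And>k. 1 \<le> k \<Longrightarrow> k \<le> m \<Longrightarrow> s k = ?A"
      by (rule down[where s=s and A="?A" and j=m and m=m, OF step]) (use sm in auto)
    have "tau (m - 1) i \<in> I m" using i1 assms(1) by (auto simp: tau_def I_def)
    then show ?thesis using s'[OF i] all by (auto simp: I_def)
  qed
qed

end
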